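(* Let $n\ge 1$ and let $\mathcal{C}$ be an $n$-qubit quantum channel (CPTP map) with entanglement fidelity $F(\mathcal{C})\neq 0$. Let $\mathcal{E}=\{(p_i,U_i)\}_{i=0}^{K-1}$ be an ensemble of $n$-qubit unitaries such that $\mathbb{E}_{\mathcal{E}}(\mathcal{C})=\mathcal{D}_{F(\mathcal{C})}$. Let $\mathcal{V}=\{((2^n+1)^{-1},V_j^\dagger)\}_{j=0}^{2^n}$ and $\mathcal{M}$ be as in the context. Then the $n$-qubit identity channel admits the quasiprobability decomposition $$\mathcal{I}^{\otimes n}=\frac{1}{F(\mathcal{C})}\,\mathbb{E}_{\mathcal{E}}(\mathcal{C})-\left(\frac{1}{F(\mathcal{C})}-1\right)\mathbb{E}_{\mathcal{V}}(\mathcal{M}).$$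
   Context: Entanglement fidelity: $F(\mathcal{C})=\langle\Phi_n|(\mathcal{I}^{\otimes n}\otimes\mathcal{C})(|\Phi_n\rangle\langle\Phi_n|)|\Phi_n\rangle$ with $|\Phi_n\rangle=2^{-n/2}\sum_{\vec k\in\{0,1\}^n}|\vec k\rangle|\vec k\rangle$. Pauli operators: for $\vec a\in\{0,1\}^n$, $X_{\vec a}=\bigotimes_i X^{a_i}$, $Z_{\vec a}=\bigotimes_i Z^{a_i}$; $\mathcal{Q}_n=\{X_{\vec x}Z_{\vec z}\}$ is the Pauli group modulo phases and $\mathcal{Q}_n^*=\mathcal{Q}_n\setminus\{I^{\otimes n}\}$. Depolarizing channel: $\mathcal{D}_p(\varphi)=p\varphi+\frac{1-p}{2^{2n}-1}\sum_{P\in\mathcal{Q}_n^*}P\varphi P$. For an ensemble $\mathcal{E}=\{(p_i,U_i)\}$, the twirl is $\mathbb{E}_{\mathcal{E}}(\mathcal{C})(\rho)=\sum_ip_iU_i^\dagger\mathcal{C}(U_i\rho U_i^\dagger)U_i$. The set $\mathcal{Q}_n^*$ is partitioned into $2^n+1$ maximally commuting subsets $S_0,\dots,S_{2^n}$ (each of $2^n-1$ pairwise commuting operators), and $V_j$ is a unitary with $S_j=\{s_{j,\vec a}V_jZ_{\vec a}V_j^\dagger:\vec a\ne\vec 0\}$, $s_{j,\vec a}\in\{\pm1\}$. $\mathcal{V}$ is the uniform ensemble over $V_0^\dagger,\dots,V_{2^n}^\dagger$, so $\mathbb{E}_{\mathcal{V}}(\mathcal{M})(\rho)=\frac{1}{2^n+1}\sum_jV_j\mathcal{M}(V_j^\dagger\rho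 V_j)V_j^\dagger$. $\mathcal{M}(\rho)=\sum_{\vec k}\operatorname{tr}[|\vec k\rangle\langle\vec k|\rho]\rho_{\vec k}$ with $\rho_{\vec k}=\frac{1}{2^n-1}\sum_{\vec l\neq\vec k}|\vec l\rangle\langle\vec l|$. *)

theory Defs
  imports Complex_Main "Jordan_Normal_Form.Matrix"
begin

text \<open>n-qubit operators are complex 2^n x 2^n matrices; the computational basis
  state |k> (k < 2^n) has qubit i equal to bit i of k.\<close>

abbreviation dimq :: "nat \<Rightarrow> nat" where "dimq n \<equiv> 2 ^ n"

definition adj :: "complex mat \<Rightarrow> complex mat" where
  "adj A = mat (dim_col A) (dim_row A) (\<lambda>(i,j). cnj (A $$ (j,i)))"

definition unitary_q :: "nat \<Rightarrow> complex mat \<Rightarrow> bool" where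
  "unitary_q n U \<longleftrightarrow> U \<in> carrier_mat (dimq n) (dimq n) \<and>
     adj U * U = 1\<^sub>m (dimq n) \<and> U * adj U = 1\<^sub>m (dimq n)"

definition trace_q :: "complex mat \<Rightarrow> complex" where
  "trace_q A = (\<Sum>i<dim_row A. A $$ (i,i))"

definition psd :: "complex mat \<Rightarrow> bool" where
  "psd A \<longleftrightarrow> dim_row A = dim_col A \<and>
     (\<forall>v :: nat \<Rightarrow> complex.
        let q = (\<Sum>i<dim_row A. \<Sum>j<dim_row A. cnj (v i) * A $$ (i,j) * v j)
        in Im q = 0 \<and> Re q \<ge> 0)"

definition ketbra :: "nat \<Rightarrow> nat \<Rightarrow> nat \<Rightarrow> complex mat" where
  "ketbra n k l = mat (dimq n) (dimq n) (\<lambda>(i,j). if i = k \<and> j = l then 1 else 0)"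

text \<open>(id_m \<otimes> C)(X) for X an (m*2^n)x(m*2^n) matrix, the first tensor factor
  indexing the blocks: block (a,b) of the result is C applied to block (a,b) of X.\<close>
definition block_q :: "nat \<Rightarrow> complex mat \<Rightarrow> nat \<Rightarrow> nat \<Rightarrow> complex mat" where
  "block_q n X a b = mat (dimq n) (dimq n) (\<lambda>(i,j). X $$ (a * dimq n + i, b * dimq n + j))"

definition id_tensor :: "nat \<Rightarrow> nat \<Rightarrow> (complex mat \<Rightarrow> complex mat) \<Rightarrow> complex mat \<Rightarrow> complex mat" where
  "id_tensor m n C X = mat (m * dimq n) (m * dimq n)
     (\<lambda>(r,c). C (block_q n X (r div dimq n) (c div dimq n)) $$ (r mod dimq n, c mod dimq n))"

definition channel :: "nat \<Rightarrow> (complex mat \<Rightarrow> complex mat) \<Rightarrow> bool" where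
  "channel n C \<longleftrightarrow>
     (\<forall>\<rho> \<in> carrier_mat (dimq n) (dimq n). C \<rho> \<in> carrier_mat (dimq n) (dimq n)) \<and>
     (\<forall>\<rho> \<in> carrier_mat (dimq n) (dimq n). \<forall>\<sigma> \<in> carrier_mat (dimq n) (dimq n).
         C (\<rho> + \<sigma>) = C \<rho> + C \<sigma>) \<and>
     (\<forall>\<rho> \<in> carrier_mat (dimq n) (dimq n). \<forall>a. C (a \<cdot>\<^sub>m \<rho>) = a \<cdot>\<^sub>m C \<rho>) \<and>
     (\<forall>\<rho> \<in> carrier_mat (dimq n) (dimq n). trace_q (C \<rho>) = trace_q \<rho>) \<and>
     (\<forall>m \<ge> 1. \<forall>X \<in> carrier_mat (m * dimq n) (m * dimq n).
         psd X \<longrightarrow> psd (id_tensor m n C X))"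

text \<open>Maximally entangled state |Phi_n> on 2n qubits (index k*2^n + l for |k>|l>)
  and the entanglement fidelity <Phi|(I \<otimes> C)(|Phi><Phi|)|Phi>.\<close>
definition phi_vec :: "nat \<Rightarrow> nat \<Rightarrow> complex" where
  "phi_vec n r = (if r div dimq n = r mod dimq n then 1 / complex_of_real (sqrt (dimq n)) else 0)"

definition phi_proj :: "nat \<Rightarrow> complex mat" where
  "phi_proj n = mat (dimq n * dimq n) (dimq n * dimq n) (\<lambda>(r,c). phi_vec n r * cnj (phi_vec n c))"

definition ent_fid :: "nat \<Rightarrow> (complex mat \<Rightarrow> complex mat) \<Rightarrow> complex" where
  "ent_fid n C = (\<Sum>r < dimq n * dimq n. \<Sum>c < dimq n * dimq n.
      cnj (phi_vec n r) * id_tensor (dimq n) n C (phi_proj n) $$ (r,c) * phi_vec n c)"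

text \<open>Pauli operator X_x Z_z (x, z bit masks < 2^n):
  X_x Z_z |c> = (-1)^(z.c) |c xor x>.\<close>
definition pauli :: "nat \<Rightarrow> nat \<times> nat \<Rightarrow> complex mat" where
  "pauli n P = (case P of (x, z) \<Rightarrow> mat (dimq n) (dimq n) (\<lambda>(r,c).
     if (\<forall>i<n. bit r i = (bit c i \<noteq> bit x i))
     then (-1) ^ card {i. i < n \<and> bit z i \<and> bit c i} else 0))"

abbreviation Zop :: "nat \<Rightarrow> nat \<Rightarrow> complex mat" where
  "Zop n a \<equiv> pauli n (0, a)"

text \<open>Q_n^*: the non-identity Paulis (modulo phases), labelled by (x,z).\<close>
definition Qstar :: "nat \<Rightarrow> (nat \<times> nat) set" where
  "Qstar n = {(x,z). x < dimq n \<and> z < dimq n \<and> (x,z) \<noteq> (0,0)}"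

definition depol :: "nat \<Rightarrow> complex \<Rightarrow> complex mat \<Rightarrow> complex mat" where
  "depol n p \<phi> = mat (dimq n) (dimq n) (\<lambda>(i,j).
     p * \<phi> $$ (i,j) + (1 - p) / (of_nat (2 ^ (2 * n)) - 1) *
       (\<Sum>P\<in>Qstar n. (pauli n P * \<phi> * adj (pauli n P)) $$ (i,j)))"

definition twirl :: "nat \<Rightarrow> nat \<Rightarrow> (nat \<Rightarrow> real) \<Rightarrow> (nat \<Rightarrow> complex mat)
    \<Rightarrow> (complex mat \<Rightarrow> complex mat) \<Rightarrow> complex mat \<Rightarrow> complex mat" where
  "twirl n K p U C \<rho> = mat (dimq n) (dimq n) (\<lambda>(i,j).
     \<Sum>q<K. complex_of_real (p q) * (adj (U q) * C (U q * \<rho> * adj (U q)) * U q) $$ (i,j))"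

definition rho_k :: "nat \<Rightarrow> nat \<Rightarrow> complex mat" where
  "rho_k n k = mat (dimq n) (dimq n) (\<lambda>(i,j).
     if i = j \<and> i \<noteq> k then 1 / (of_nat (dimq n) - 1) else 0)"

definition meas_M :: "nat \<Rightarrow> complex mat \<Rightarrow> complex mat" where
  "meas_M n \<rho> = mat (dimq n) (dimq n) (\<lambda>(i,j).
     \<Sum>k<dimq n. trace_q (ketbra n k k * \<rho>) * rho_k n k $$ (i,j))"

text \<open>Twirl over the uniform ensemble V = {V_0^dagger, ..., V_{2^n}^dagger}.\<close>
definition twirl_V :: "nat \<Rightarrow> (nat \<Rightarrow> complex mat) \<Rightarrow> (complex mat \<Rightarrow> complex mat)
    \<Rightarrow> complex mat \<Rightarrow> complex mat" where
  "twirl_V n V M \<rho> = mat (dimq n) (dimq n) (\<lambda>(i,j).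
     1 / (of_nat (dimq n) + 1) *
     (\<Sum>j'\<le>dimq n. (V j' * M (adj (V j') * \<rho> * V j') * adj (V j')) $$ (i,j)))"

end

theory Submission
  imports Defs
begin


lemma mult2_entry:
  assumes "A \<in> carrier_mat m k" "B \<in> carrier_mat k l" "i < m" "j < l"
  shows "(A * B) $$ (i,j) = (\<Sum>a<k. A $$ (i,a) * B $$ (a,j))"
  using assms by (simp add: scalar_prod_def atLeast0LessThan)

lemma mult3_entry:
  assumes "A \<in> carrier_mat N N" "B \<in> carrier_mat N N" "C \<in> carrier_mat N N" "i < N" "j < N"
  shows "(A * B * C) $$ (i,j) = (\<Sum>a<N. \<Sum>b<N. A $$ (i,a) * B $$ (a,b) * C $$ (b,j))"
proof -
  have "(A * B * C) $$ (i,j) = (\<Sum>b<N. (A*B) $$ (i,b) * C $$ (b,j))"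
    using assms by (intro mult2_entry) auto
  also have "\<dots> = (\<Sum>b<N. \<Sum>a<N. A $$ (i,a) * B $$ (a,b) * C $$ (b,j))"
    using assms by (intro sum.cong refl, subst mult2_entry[of _ _ N]) (auto simp: sum_distrib_right)
  also have "\<dots> = (\<Sum>a<N. \<Sum>b<N. A $$ (i,a) * B $$ (a,b) * C $$ (b,j))"
    by (rule sum.swap)
  finally show ?thesis .
qed

lemma adj_carrier[simp]: "A \<in> carrier_mat m k \<Longrightarrow> adj A \<in> carrier_mat k m"
  by (simp add: adj_def)

lemma adj_dims[simp]: "dim_row (adj A) = dim_col A" "dim_col (adj A) = dim_row A"
  by (simp_all add: adj_def)

lemma adj_entry[simp]: "i < dim_col A \<Longrightarrow> j < dim_row A \<Longrightarrow> adj A $$ (i,j) = cnj (A $$ (j,i))"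
  by (simp add: adj_def)

lemma adj_mult: assumes A: "A \<in> carrier_mat m k" and B: "B \<in> carrier_mat k l"
  shows "adj (A * B) = adj B * adj A"
proof (rule eq_matI)
  fix i j assume ij: "i < dim_row (adj B * adj A)" "j < dim_col (adj B * adj A)"
  then have i: "i < l" and j: "j < m" using A B by auto
  have "adj (A * B) $$ (i, j) = cnj ((A*B) $$ (j,i))" using A B i j by simp
  also have "\<dots> = (\<Sum>a<k. cnj (B $$ (a,i)) * cnj (A $$ (j,a)))"
    using A B i j by (subst mult2_entry[OF A B]) (auto simp: mult.commute)
  also have "\<dots> = (adj B * adj A) $$ (i, j)"
    using A B i j by (subst mult2_entry[of _ l k _ m]) auto
  finally show "adj (A * B) $$ (i, j) = (adj B * adj A) $$ (i, j)" .
qed (use A B in auto)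

lemma adj_adj: "adj (adj A) = A"
  by (rule eq_matI) auto

lemma adj_smult: "adj (c \<cdot>\<^sub>m A) = cnj c \<cdot>\<^sub>m adj A"
  by (rule eq_matI) auto

lemma unit_rows:
  assumes "unitary_q n V" "r < dimq n" "s < dimq n"
  shows "(\<Sum>c<dimq n. V $$ (r,c) * cnj (V $$ (s,c))) = (if r = s then 1 else 0)"
proof -
  have V: "V \<in> carrier_mat (dimq n) (dimq n)" and e: "V * adj V = 1\<^sub>m (dimq n)"
    using assms unfolding unitary_q_def by auto
  have "(V * adj V) $$ (r,s) = (\<Sum>c<dimq n. V $$ (r,c) * cnj (V $$ (s,c)))"
    using V assms by (subst mult2_entry[of _ _ "dimq n"]) auto
  then show ?thesis using e assms by simp
qed



lemma bit_lt_pow: "(a::nat) < 2^n \<Longrightarrow> bit a i \<Longrightarrow> i < n"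
  by (metis bit_take_bit_iff take_bit_nat_eq_self_iff)

lemma low_bits_eq: "(a::nat) < 2^n \<Longrightarrow> b < 2^n \<Longrightarrow> (\<forall>i<n. bit a i = bit b i) \<Longrightarrow> a = b"
  by (metis bit_eq_iff bit_lt_pow)

lemma xor_lt: "(a::nat) < 2^n \<Longrightarrow> b < 2^n \<Longrightarrow> xor a b < 2^n"
  by (metis take_bit_nat_eq_self_iff take_bit_xor)

definition sg :: "nat \<Rightarrow> nat \<Rightarrow> nat \<Rightarrow> complex" where
  "sg n z c = (-1) ^ card {i. i < n \<and> bit z i \<and> bit c i}"

lemma pauli_entry:
  assumes "x < dimq n" "r < dimq n" "c < dimq n"
  shows "pauli n (x,z) $$ (r,c) = (if r = xor c x then sg n z c else 0)"
proof -
  have "(\<forall>i<n. bit r i = (bit c i \<noteq> bit x i)) \<longleftrightarrow> r = xor c x"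
    using low_bits_eq[OF assms(2) xor_lt[OF assms(3,1)]] by (auto simp: bit_xor_iff)
  then show ?thesis using assms by (simp add: pauli_def sg_def)
qed

lemma pauli_carrier[simp]: "pauli n P \<in> carrier_mat (dimq n) (dimq n)"
  by (simp add: pauli_def split: prod.splits)

lemma pauli_dims[simp]: "dim_row (pauli n P) = dimq n" "dim_col (pauli n P) = dimq n"
  by (simp_all add: pauli_def split: prod.splits)

lemma sg_sq: "sg n z c * sg n z c = 1"
  by (simp add: sg_def power_mult_distrib[symmetric])

lemma cnj_sg[simp]: "cnj (sg n z c) = sg n z c"
  by (simp add: sg_def)

lemma sg_flip:
  assumes "i0 < n"
  shows "sg n (xor z (2^i0)) c = (if bit c i0 then -1 else 1) * sg n z c"
proof -
  let ?A = "{i. i < n \<and> bit z i \<and> bit c i}"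
  have fin: "finite ?A" by simp
  show ?thesis
  proof (cases "bit c i0")
    case False
    then have "{i. i < n \<and> bit (xor z (2^i0)) i \<and> bit c i} = ?A"
      by (auto simp: bit_xor_iff bit_exp_iff)
    then show ?thesis using False by (simp add: sg_def)
  next
    case True
    show ?thesis
    proof (cases "bit z i0")
      case True2: True
      then have e: "{i. i < n \<and> bit (xor z (2^i0)) i \<and> bit c i} = ?A - {i0}"
        using True by (auto simp: bit_xor_iff bit_exp_iff)
      have "i0 \<in> ?A" using True True2 assms by auto
      then have "card ?A = Suc (card (?A - {i0}))"
        by (metis card_Suc_Diff1 fin)
      then show ?thesis using True by (simp add: sg_def e)
    next
      case False2: False
      then have e: "{i. i < n \<and> bit (xor z (2^i0)) i \<and> bit c i} = insert i0 ?A"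
        using True assms by (auto simp: bit_xor_iff bit_exp_iff)
      have "i0 \<notin> ?A" using False2 by auto
      then show ?thesis using True by (simp add: sg_def e)
    qed
  qed
qed

lemma char_sum:
  assumes c: "c < dimq n" and d: "d < dimq n"
  shows "(\<Sum>z<dimq n. sg n z c * sg n z d) = (if c = d then of_nat (dimq n) else 0)"
proof (cases "c = d")
  case True
  then show ?thesis by (simp add: sg_sq)
next
  case False
  then obtain i0 where i0: "i0 < n" "bit c i0 \<noteq> bit d i0"
    using low_bits_eq[OF c d] by blast
  let ?f = "\<lambda>z. sg n z c * sg n z d"
  let ?g = "\<lambda>z::nat. xor z (2^i0)"
  have e: "2^i0 < (2::nat)^n" using i0 by simp
  have bij: "bij_betw ?g {..<dimq n} {..<dimq n}"
  proof (rule bij_betw_byWitness[where f' = ?g])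
    show "\<forall>a\<in>{..<dimq n}. ?g (?g a) = a" by (simp add: xor.assoc)
    show "\<forall>a\<in>{..<dimq n}. ?g (?g a) = a" by (simp add: xor.assoc)
    show "?g ` {..<dimq n} \<subseteq> {..<dimq n}" using xor_lt[OF _ e] by auto
    show "?g ` {..<dimq n} \<subseteq> {..<dimq n}" using xor_lt[OF _ e] by auto
  qed
  have "(\<Sum>z<dimq n. ?f z) = (\<Sum>z<dimq n. ?f (?g z))"
    by (rule sum.reindex_bij_betw[OF bij, symmetric])
  also have "\<dots> = (\<Sum>z<dimq n. - ?f z)"
    using i0 by (intro sum.cong refl) (auto simp: sg_flip)
  finally have "(\<Sum>z<dimq n. ?f z) = 0"
    by (simp add: sum_negf)
  then show ?thesis using False by simp
qed



lemma xor_swap: "((r::nat) = xor a x) \<longleftrightarrow> (a = xor r x)"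
  by (metis xor.assoc xor_self_eq xor.right_neutral)

lemma pconj_term:
  "r < dimq n \<Longrightarrow> s < dimq n \<Longrightarrow> x < dimq n \<Longrightarrow> a < dimq n \<Longrightarrow> b < dimq n \<Longrightarrow>
   pauli n (x, z) $$ (r, a) * \<rho> $$ (a, b) * cnj (pauli n (x, z) $$ (s, b)) =
   (if a = xor r x \<and> b = xor s x then sg n z a * \<rho> $$ (a, b) * sg n z b else 0)"
  by (simp add: pauli_entry xor_swap)

lemma pconj_entry:
  assumes rho: "\<rho> \<in> carrier_mat (dimq n) (dimq n)" and x: "x < dimq n"
    and r: "r < dimq n" and s: "s < dimq n"
  shows "(pauli n (x,z) * \<rho> * adj (pauli n (x,z))) $$ (r,s)
     = sg n z (xor r x) * \<rho> $$ (xor r x, xor s x) * sg n z (xor s x)"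
proof -
  have rx: "xor r x < dimq n" using xor_lt[OF r x] .
  have sx: "xor s x < dimq n" using xor_lt[OF s x] .
  have "(pauli n (x,z) * \<rho> * adj (pauli n (x,z))) $$ (r,s)
    = (\<Sum>a<dimq n. \<Sum>b<dimq n. pauli n (x,z) $$ (r,a) * \<rho> $$ (a,b) * cnj (pauli n (x,z) $$ (s,b)))"
    using rho r s by (subst mult3_entry[of _ "dimq n"]) auto
  also have "\<dots> = (\<Sum>a<dimq n. \<Sum>b<dimq n. if a = xor r x \<and> b = xor s x then sg n z a * \<rho> $$ (a,b) * sg n z b else 0)"
    using r s x by (intro sum.cong refl) (simp add: pconj_term)
  also have "\<dots> = sg n z (xor r x) * \<rho> $$ (xor r x, xor s x) * sg n z (xor s x)"
  proof -
    have "\<And>a. (\<Sum>b<dimq n. if a = xor r x \<and> b = xor s x then sg n z a * \<rho> $$ (a,b) * sg n z b else 0)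
       = (if a = xor r x then sg n z a * \<rho> $$ (a,xor s x) * sg n z (xor s x) else 0)"
      using sx by (cases "a = xor r x") simp_all
    then show ?thesis using rx by simp
  qed
  finally show ?thesis .
qed

lemma zsum_entry:
  assumes rho: "\<rho> \<in> carrier_mat (dimq n) (dimq n)" and x: "x < dimq n"
    and r: "r < dimq n" and s: "s < dimq n"
  shows "(\<Sum>z<dimq n. (pauli n (x,z) * \<rho> * adj (pauli n (x,z))) $$ (r,s))
     = (if r = s then of_nat (dimq n) * \<rho> $$ (xor r x, xor r x) else 0)"
proof -
  have "(\<Sum>z<dimq n. (pauli n (x,z) * \<rho> * adj (pauli n (x,z))) $$ (r,s))
     = \<rho> $$ (xor r x, xor s x) * (\<Sum>z<dimq n. sg n z (xor r x) * sg n z (xor s x))"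
    using assms by (simp add: pconj_entry sum_distrib_left mult_ac del: index_mult_mat)
  also have "\<dots> = (if r = s then of_nat (dimq n) * \<rho> $$ (xor r x, xor r x) else 0)"
    using xor_lt[OF r x] xor_lt[OF s x] by (simp add: char_sum xor_swap[symmetric] xor.assoc)
  finally show ?thesis .
qed

lemma trace_sum: "\<rho> \<in> carrier_mat N N \<Longrightarrow> trace_q \<rho> = (\<Sum>k<N. \<rho> $$ (k,k))"
  by (simp add: trace_q_def)

lemma allsum_entry:
  assumes rho: "\<rho> \<in> carrier_mat (dimq n) (dimq n)"
    and r: "r < dimq n" and s: "s < dimq n"
  shows "(\<Sum>P\<in>{..<dimq n} \<times> {..<dimq n}. (pauli n P * \<rho> * adj (pauli n P)) $$ (r,s))
     = (if r = s then of_nat (dimq n) * trace_q \<rho> else 0)"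
proof -
  have "(\<Sum>P\<in>{..<dimq n} \<times> {..<dimq n}. (pauli n P * \<rho> * adj (pauli n P)) $$ (r,s))
    = (\<Sum>x<dimq n. \<Sum>z<dimq n. (pauli n (x,z) * \<rho> * adj (pauli n (x,z))) $$ (r,s))"
    by (simp add: sum.cartesian_product)
  also have "\<dots> = (\<Sum>x<dimq n. if r = s then of_nat (dimq n) * \<rho> $$ (xor r x, xor r x) else 0)"
    using assms by (intro sum.cong refl) (simp add: zsum_entry del: index_mult_mat)
  also have "\<dots> = (if r = s then of_nat (dimq n) * (\<Sum>x<dimq n. \<rho> $$ (xor r x, xor r x)) else 0)"
    by (simp add: sum_distrib_left)
  also have "(\<Sum>x<dimq n. \<rho> $$ (xor r x, xor r x)) = (\<Sum>k<dimq n. \<rho> $$ (k, k))"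
  proof -
    let ?g = "\<lambda>x::nat. xor r x"
    have bij: "bij_betw ?g {..<dimq n} {..<dimq n}"
    proof (rule bij_betw_byWitness[where f' = ?g])
      show "\<forall>a\<in>{..<dimq n}. ?g (?g a) = a" by (simp add: xor.assoc[symmetric])
      show "\<forall>a\<in>{..<dimq n}. ?g (?g a) = a" by (simp add: xor.assoc[symmetric])
      show "?g ` {..<dimq n} \<subseteq> {..<dimq n}" using xor_lt[OF r] by auto
      show "?g ` {..<dimq n} \<subseteq> {..<dimq n}" using xor_lt[OF r] by auto
    qed
    show ?thesis by (rule sum.reindex_bij_betw[OF bij])
  qed
  finally show ?thesis using rho by (simp add: trace_sum)
qed

lemma Qstar_eq: "Qstar n = ({..<dimq n} \<times> {..<dimq n}) - {(0,0)}"
  by (auto simp: Qstar_def)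

lemma Tsum_entry:
  assumes rho: "\<rho> \<in> carrier_mat (dimq n) (dimq n)"
    and r: "r < dimq n" and s: "s < dimq n"
  shows "(\<Sum>P\<in>Qstar n. (pauli n P * \<rho> * adj (pauli n P)) $$ (r,s))
     = (if r = s then of_nat (dimq n) * trace_q \<rho> else 0) - \<rho> $$ (r,s)"
proof -
  have z: "(0::nat,0::nat) \<in> {..<dimq n} \<times> {..<dimq n}" by simp
  have "(pauli n (0,0) * \<rho> * adj (pauli n (0,0))) $$ (r,s) = \<rho> $$ (r,s)"
    using assms by (simp add: pconj_entry sg_def del: index_mult_mat)
  then show ?thesis
    using sum.remove[OF _ z, of "\<lambda>P. (pauli n P * \<rho> * adj (pauli n P)) $$ (r,s)"]
      allsum_entry[OF assms] by (simp add: Qstar_eq)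
qed



lemma sg_zero[simp]: "sg n z 0 = 1"
  by (simp add: sg_def)

lemma sg_z0[simp]: "sg n 0 c = 1"
  by (simp add: sg_def)

lemma sg_pow2: "i < n \<Longrightarrow> sg n z (2^i) = (if bit z i then -1 else 1)"
proof -
  assume i: "i < n"
  have "{k. k < n \<and> bit z k \<and> bit ((2::nat)^i) k} = (if bit z i then {i} else {})"
    using i by (auto simp: bit_exp_iff)
  then show ?thesis by (simp add: sg_def)
qed

lemma pauli_unique:
  assumes x: "x < dimq n" and x': "x' < dimq n" and z: "z < dimq n" and z': "z' < dimq n"
    and c: "cmod c = 1" and c': "cmod c' = 1"
    and eq: "c \<cdot>\<^sub>m pauli n (x,z) = c' \<cdot>\<^sub>m pauli n (x',z')"
  shows "(x,z) = (x',z')"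
proof -
  have ent: "c * pauli n (x,z) $$ (r,d) = c' * pauli n (x',z') $$ (r,d)"
    if "r < dimq n" "d < dimq n" for r d
  proof -
    have "(c \<cdot>\<^sub>m pauli n (x,z)) $$ (r,d) = (c' \<cdot>\<^sub>m pauli n (x',z')) $$ (r,d)" using eq by simp
    then show ?thesis using that by simp
  qed
  have c0: "c \<noteq> 0" using c by auto
  have "c * pauli n (x,z) $$ (x,0) = c' * pauli n (x',z') $$ (x,0)" using ent[OF x] by simp
  then have e1: "c = c' * (if x = x' then 1 else 0)"
    using x x' by (simp add: pauli_entry)
  then have xx: "x = x'" using c0 by (auto split: if_splits)
  then have cc: "c = c'" using e1 by simp
  have "bit z i = bit z' i" if i: "i < n" for i
  proof -
    have p: "(2::nat)^i < 2^n" using i by simp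
    have "c * pauli n (x,z) $$ (xor (2^i) x, 2^i) = c' * pauli n (x',z') $$ (xor (2^i) x, 2^i)"
      using ent[OF xor_lt[OF p x] p] .
    then have "c * sg n z (2^i) = c * sg n z' (2^i)"
      using xx cc p x xor_lt[OF p x] by (simp add: pauli_entry)
    then have "sg n z (2^i) = sg n z' (2^i)" using c0 by simp
    then show ?thesis using i by (simp add: sg_pow2 split: if_splits)
  qed
  then have "z = z'" using low_bits_eq[OF z z'] by blast
  then show ?thesis using xx by simp
qed

lemma pauli00: "pauli n (0,0) = 1\<^sub>m (dimq n)"
  by (rule eq_matI) (auto simp: pauli_entry)

lemma phase_conj:
  assumes rho: "\<rho> \<in> carrier_mat (dimq n) (dimq n)" and P: "P \<in> carrier_mat (dimq n) (dimq n)"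
    and c: "cmod c = 1" and r: "r < dimq n" and s: "s < dimq n"
  shows "((c \<cdot>\<^sub>m P) * \<rho> * adj (c \<cdot>\<^sub>m P)) $$ (r,s) = (P * \<rho> * adj P) $$ (r,s)"
proof -
  have cc: "c * cnj c = 1"
    using c complex_norm_square[of c] by simp
  have "((c \<cdot>\<^sub>m P) * \<rho> * adj (c \<cdot>\<^sub>m P)) $$ (r,s)
     = (\<Sum>a<dimq n. \<Sum>b<dimq n. (c * cnj c) * (P $$ (r,a) * \<rho> $$ (a,b) * cnj (P $$ (s,b))))"
    using assms by (subst mult3_entry[of _ "dimq n"]) (auto simp: mult_ac intro!: sum.cong)
  also have "\<dots> = (P * \<rho> * adj P) $$ (r,s)"
    using assms cc by (subst mult3_entry[of _ "dimq n"]) auto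
  finally show ?thesis .
qed

lemma ketbra_trace: "k < dimq n \<Longrightarrow> \<sigma> \<in> carrier_mat (dimq n) (dimq n) \<Longrightarrow>
   trace_q (ketbra n k k * \<sigma>) = \<sigma> $$ (k,k)"
proof -
  assume k: "k < dimq n" and s: "\<sigma> \<in> carrier_mat (dimq n) (dimq n)"
  have kb: "ketbra n k k \<in> carrier_mat (dimq n) (dimq n)" by (simp add: ketbra_def)
  have "trace_q (ketbra n k k * \<sigma>) = (\<Sum>i<dimq n. (ketbra n k k * \<sigma>) $$ (i,i))"
    using kb by (simp add: trace_q_def)
  also have "\<dots> = (\<Sum>i<dimq n. \<Sum>a<dimq n. ketbra n k k $$ (i,a) * \<sigma> $$ (a,i))"
    using kb s by (intro sum.cong refl) (simp add: mult2_entry[OF kb s] del: index_mult_mat)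
  also have "\<dots> = (\<Sum>i<dimq n. if i = k then \<sigma> $$ (k,i) else 0)"
  proof (intro sum.cong refl)
    fix i assume i: "i \<in> {..<dimq n}"
    have "(\<Sum>a<dimq n. ketbra n k k $$ (i,a) * \<sigma> $$ (a,i)) = (\<Sum>a<dimq n. if a = k then (if i = k then \<sigma> $$ (a,i) else 0) else 0)"
      using i by (intro sum.cong refl) (auto simp: ketbra_def)
    then show "(\<Sum>a<dimq n. ketbra n k k $$ (i,a) * \<sigma> $$ (a,i)) = (if i = k then \<sigma> $$ (k,i) else 0)"
      using k by simp
  qed
  also have "\<dots> = \<sigma> $$ (k,k)" using k by simp
  finally show ?thesis .
qed

lemma meas_entry:
  assumes s: "\<sigma> \<in> carrier_mat (dimq n) (dimq n)" and r: "r < dimq n" and t: "t < dimq n"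
  shows "meas_M n \<sigma> $$ (r,t) = (if r = t then (trace_q \<sigma> - \<sigma> $$ (r,r)) / (of_nat (dimq n) - 1) else 0)"
proof -
  have "meas_M n \<sigma> $$ (r,t) = (\<Sum>k<dimq n. \<sigma> $$ (k,k) * rho_k n k $$ (r,t))"
    using assms by (simp add: meas_M_def ketbra_trace)
  also have "\<dots> = (\<Sum>k<dimq n. if r = t then (if k = r then 0 else \<sigma> $$ (k,k) / (of_nat (dimq n) - 1)) else 0)"
    using r t by (intro sum.cong refl) (auto simp: rho_k_def)
  also have "\<dots> = (if r = t then (trace_q \<sigma> - \<sigma> $$ (r,r)) / (of_nat (dimq n) - 1) else 0)"
  proof (cases "r = t")
    case True
    have "(\<Sum>k<dimq n. (if k = r then 0 else \<sigma> $$ (k,k) / (of_nat (dimq n) - 1)))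
       = (\<Sum>k<dimq n. \<sigma> $$ (k,k) / (of_nat (dimq n) - 1)) - \<sigma> $$ (r,r) / (of_nat (dimq n) - 1)"
    proof -
      let ?g = "\<lambda>k. \<sigma> $$ (k,k) / (of_nat (dimq n) - 1)"
      have rr: "r \<in> {..<dimq n}" using r by simp
      have "(\<Sum>k<dimq n. (if k = r then 0 else ?g k)) = (if r = r then 0 else ?g r) + (\<Sum>k\<in>{..<dimq n} - {r}. (if k = r then 0 else ?g k))"
        by (rule sum.remove[OF _ rr]) simp
      also have "\<dots> = (\<Sum>k\<in>{..<dimq n} - {r}. ?g k)" by simp
      also have "\<dots> = (\<Sum>k<dimq n. ?g k) - ?g r"
        using sum.remove[OF _ rr, of ?g] by simp
      finally show ?thesis .
    qed
    then show ?thesis using True s by (simp add: trace_sum sum_divide_distrib diff_divide_distrib)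
  qed simp
  finally show ?thesis .
qed



lemma unit_carrier: "unitary_q n V \<Longrightarrow> V \<in> carrier_mat (dimq n) (dimq n)"
  by (simp add: unitary_q_def)

lemma trace_conj:
  assumes U: "unitary_q n V" and rho: "\<rho> \<in> carrier_mat (dimq n) (dimq n)"
  shows "trace_q (adj V * \<rho> * V) = trace_q \<rho>"
proof -
  have V: "V \<in> carrier_mat (dimq n) (dimq n)" using unit_carrier[OF U] .
  have aV: "adj V \<in> carrier_mat (dimq n) (dimq n)" using V by simp
  have "trace_q (adj V * \<rho> * V) = (\<Sum>k<dimq n. (adj V * \<rho> * V) $$ (k,k))"
    using V by (simp add: trace_q_def)
  also have "\<dots> = (\<Sum>k<dimq n. \<Sum>a<dimq n. \<Sum>b<dimq n. cnj (V $$ (a,k)) * \<rho> $$ (a,b) * V $$ (b,k))"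
    using V aV rho by (intro sum.cong refl) (simp add: mult3_entry[OF aV rho V] del: index_mult_mat)
  also have "\<dots> = (\<Sum>a<dimq n. \<Sum>b<dimq n. \<rho> $$ (a,b) * (\<Sum>k<dimq n. V $$ (b,k) * cnj (V $$ (a,k))))"
  proof -
    have "(\<Sum>k<dimq n. \<Sum>a<dimq n. \<Sum>b<dimq n. cnj (V $$ (a,k)) * \<rho> $$ (a,b) * V $$ (b,k))
      = (\<Sum>a<dimq n. \<Sum>k<dimq n. \<Sum>b<dimq n. cnj (V $$ (a,k)) * \<rho> $$ (a,b) * V $$ (b,k))"
      by (rule sum.swap)
    also have "\<dots> = (\<Sum>a<dimq n. \<Sum>b<dimq n. \<Sum>k<dimq n. cnj (V $$ (a,k)) * \<rho> $$ (a,b) * V $$ (b,k))"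
      by (rule sum.cong[OF refl], rule sum.swap)
    also have "\<dots> = (\<Sum>a<dimq n. \<Sum>b<dimq n. \<rho> $$ (a,b) * (\<Sum>k<dimq n. V $$ (b,k) * cnj (V $$ (a,k))))"
      by (simp add: sum_distrib_left mult_ac)
    finally show ?thesis .
  qed
  also have "\<dots> = (\<Sum>a<dimq n. \<Sum>b<dimq n. (if b = a then \<rho> $$ (a,b) else 0))"
    by (intro sum.cong refl) (simp add: unit_rows[OF U])
  also have "\<dots> = trace_q \<rho>" using rho by (simp add: trace_sum)
  finally show ?thesis .
qed

lemma multN: "A \<in> carrier_mat N N \<Longrightarrow> B \<in> carrier_mat N N \<Longrightarrow> A * B \<in> carrier_mat N N"
  by (rule mult_carrier_mat)

lemma assocN: "A \<in> carrier_mat N N \<Longrightarrow> B \<in> carrier_mat N N \<Longrightarrow> C \<in> carrier_mat N N \<Longrightarrow> A * B * C = A * (B * C)"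
  by (rule assoc_mult_mat)

lemma Zop_conj:
  assumes U: "unitary_q n V" and rho: "\<rho> \<in> carrier_mat (dimq n) (dimq n)"
  shows "(V * Zop n a * adj V) * \<rho> * adj (V * Zop n a * adj V)
       = V * (Zop n a * (adj V * \<rho> * V) * adj (Zop n a)) * adj V"
proof -
  have V: "V \<in> carrier_mat (dimq n) (dimq n)" using unit_carrier[OF U] .
  have aV: "adj V \<in> carrier_mat (dimq n) (dimq n)" using V by simp
  have Z: "Zop n a \<in> carrier_mat (dimq n) (dimq n)" by simp
  have aZ: "adj (Zop n a) \<in> carrier_mat (dimq n) (dimq n)" by simp
  have VZ: "V * Zop n a \<in> carrier_mat (dimq n) (dimq n)" using multN[OF V Z] .
  have "adj (V * Zop n a * adj V) = adj (adj V) * adj (V * Zop n a)"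
    by (rule adj_mult[OF VZ aV])
  also have "\<dots> = V * (adj (Zop n a) * adj V)"
    by (simp only: adj_adj adj_mult[OF V Z])
  finally have e: "adj (V * Zop n a * adj V) = V * (adj (Zop n a) * adj V)" .
  show ?thesis unfolding e
    using V aV Z aZ rho by (simp only: assocN multN)
qed

lemma VMV_entry:
  assumes U: "unitary_q n V" and rho: "\<rho> \<in> carrier_mat (dimq n) (dimq n)"
    and r: "r < dimq n" and s: "s < dimq n"
  shows "(V * meas_M n (adj V * \<rho> * V) * adj V) $$ (r,s)
    = ((if r = s then trace_q \<rho> else 0)
       - (1 / of_nat (dimq n)) * (\<Sum>a<dimq n. ((V * Zop n a * adj V) * \<rho> * adj (V * Zop n a * adj V)) $$ (r,s)))
      / (of_nat (dimq n) - 1)"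
proof -
  have V: "V \<in> carrier_mat (dimq n) (dimq n)" using unit_carrier[OF U] .
  have aV: "adj V \<in> carrier_mat (dimq n) (dimq n)" using V by simp
  define \<sigma> where "\<sigma> = adj V * \<rho> * V"
  have sig: "\<sigma> \<in> carrier_mat (dimq n) (dimq n)" unfolding \<sigma>_def by (rule mult_carrier_mat[OF mult_carrier_mat[OF aV rho] V])
  have M: "meas_M n \<sigma> \<in> carrier_mat (dimq n) (dimq n)" by (simp add: meas_M_def)
  define D where "D = (\<Sum>a<dimq n. V $$ (r,a) * \<sigma> $$ (a,a) * cnj (V $$ (s,a)))"
  have "(V * meas_M n \<sigma> * adj V) $$ (r,s)
     = (\<Sum>a<dimq n. \<Sum>b<dimq n. V $$ (r,a) * meas_M n \<sigma> $$ (a,b) * cnj (V $$ (s,b)))"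
    using V M r s by (subst mult3_entry[OF V M aV]) auto
  also have "\<dots> = (\<Sum>a<dimq n. V $$ (r,a) * ((trace_q \<sigma> - \<sigma> $$ (a,a)) / (of_nat (dimq n) - 1)) * cnj (V $$ (s,a)))"
  proof (intro sum.cong refl)
    fix a assume a: "a \<in> {..<dimq n}"
    have "(\<Sum>b<dimq n. V $$ (r,a) * meas_M n \<sigma> $$ (a,b) * cnj (V $$ (s,b)))
      = (\<Sum>b<dimq n. if b = a then V $$ (r,a) * ((trace_q \<sigma> - \<sigma> $$ (a,a)) / (of_nat (dimq n) - 1)) * cnj (V $$ (s,b)) else 0)"
      using a by (intro sum.cong refl) (auto simp: meas_entry[OF sig])
    then show "(\<Sum>b<dimq n. V $$ (r,a) * meas_M n \<sigma> $$ (a,b) * cnj (V $$ (s,b)))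
      = V $$ (r,a) * ((trace_q \<sigma> - \<sigma> $$ (a,a)) / (of_nat (dimq n) - 1)) * cnj (V $$ (s,a))"
      using a by simp
  qed
  also have "\<dots> = (trace_q \<sigma> * (\<Sum>a<dimq n. V $$ (r,a) * cnj (V $$ (s,a))) - D) / (of_nat (dimq n) - 1)"
  proof -
    let ?d = "of_nat (dimq n) - (1::complex)"
    have "(\<Sum>a<dimq n. V $$ (r,a) * ((trace_q \<sigma> - \<sigma> $$ (a,a)) / ?d) * cnj (V $$ (s,a)))
       = (\<Sum>a<dimq n. (trace_q \<sigma> * (V $$ (r,a) * cnj (V $$ (s,a))) - V $$ (r,a) * \<sigma> $$ (a,a) * cnj (V $$ (s,a))) / ?d)"
      by (intro sum.cong refl) (simp add: diff_divide_distrib right_diff_distrib left_diff_distrib mult_ac)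
    also have "\<dots> = (\<Sum>a<dimq n. trace_q \<sigma> * (V $$ (r,a) * cnj (V $$ (s,a))) - V $$ (r,a) * \<sigma> $$ (a,a) * cnj (V $$ (s,a))) / ?d"
      by (rule sum_divide_distrib[symmetric])
    also have "\<dots> = (trace_q \<sigma> * (\<Sum>a<dimq n. V $$ (r,a) * cnj (V $$ (s,a))) - D) / ?d"
      unfolding D_def by (simp only: sum_subtractf sum_distrib_left)
    finally show ?thesis .
  qed
  also have "\<dots> = ((if r = s then trace_q \<rho> else 0) - D) / (of_nat (dimq n) - 1)"
    using unit_rows[OF U r s] trace_conj[OF U rho] by (simp add: \<sigma>_def)
  finally have 1: "(V * meas_M n \<sigma> * adj V) $$ (r,s) = ((if r = s then trace_q \<rho> else 0) - D) / (of_nat (dimq n) - 1)" .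
  have "(\<Sum>z<dimq n. ((V * Zop n z * adj V) * \<rho> * adj (V * Zop n z * adj V)) $$ (r,s))
     = (\<Sum>z<dimq n. (V * (Zop n z * \<sigma> * adj (Zop n z)) * adj V) $$ (r,s))"
    by (simp add: Zop_conj[OF U rho] \<sigma>_def del: index_mult_mat)
  also have "\<dots> = (\<Sum>z<dimq n. \<Sum>a<dimq n. \<Sum>b<dimq n. V $$ (r,a) * (Zop n z * \<sigma> * adj (Zop n z)) $$ (a,b) * cnj (V $$ (s,b)))"
  proof (rule sum.cong[OF refl])
    fix z
    have ZS: "Zop n z * \<sigma> * adj (Zop n z) \<in> carrier_mat (dimq n) (dimq n)"
      using multN[OF multN[OF pauli_carrier sig] adj_carrier[OF pauli_carrier]] .
    show "(V * (Zop n z * \<sigma> * adj (Zop n z)) * adj V) $$ (r,s) = (\<Sum>a<dimq n. \<Sum>b<dimq n. V $$ (r,a) * (Zop n z * \<sigma> * adj (Zop n z)) $$ (a,b) * cnj (V $$ (s,b)))"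
      using V aV r s by (simp add: mult3_entry[OF V ZS aV] del: index_mult_mat)
  qed
  also have "\<dots> = (\<Sum>a<dimq n. \<Sum>b<dimq n. V $$ (r,a) * (\<Sum>z<dimq n. (Zop n z * \<sigma> * adj (Zop n z)) $$ (a,b)) * cnj (V $$ (s,b)))"
  proof -
    have "(\<Sum>z<dimq n. \<Sum>a<dimq n. \<Sum>b<dimq n. V $$ (r,a) * (Zop n z * \<sigma> * adj (Zop n z)) $$ (a,b) * cnj (V $$ (s,b)))
      = (\<Sum>a<dimq n. \<Sum>z<dimq n. \<Sum>b<dimq n. V $$ (r,a) * (Zop n z * \<sigma> * adj (Zop n z)) $$ (a,b) * cnj (V $$ (s,b)))"
      by (rule sum.swap)
    also have "\<dots> = (\<Sum>a<dimq n. \<Sum>b<dimq n. \<Sum>z<dimq n. V $$ (r,a) * (Zop n z * \<sigma> * adj (Zop n z)) $$ (a,b) * cnj (V $$ (s,b)))"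
      by (rule sum.cong[OF refl], rule sum.swap)
    also have "\<dots> = (\<Sum>a<dimq n. \<Sum>b<dimq n. V $$ (r,a) * (\<Sum>z<dimq n. (Zop n z * \<sigma> * adj (Zop n z)) $$ (a,b)) * cnj (V $$ (s,b)))"
      by (simp add: sum_distrib_left sum_distrib_right del: index_mult_mat)
    finally show ?thesis .
  qed
  also have "\<dots> = (\<Sum>a<dimq n. \<Sum>b<dimq n. if b = a then of_nat (dimq n) * (V $$ (r,a) * \<sigma> $$ (a,a) * cnj (V $$ (s,a))) else 0)"
  proof -
    have zs: "(\<Sum>z<dimq n. (Zop n z * \<sigma> * adj (Zop n z)) $$ (a,b)) = (if a = b then of_nat (dimq n) * \<sigma> $$ (a,a) else 0)"
      if "a < dimq n" "b < dimq n" for a b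
      using zsum_entry[OF sig _ that, of 0] by simp
    show ?thesis by (intro sum.cong refl) (simp add: zs del: index_mult_mat)
  qed
  also have "\<dots> = of_nat (dimq n) * D"
  proof -
    have "\<And>a. a < dimq n \<Longrightarrow> (\<Sum>b<dimq n. if b = a then of_nat (dimq n) * (V $$ (r,a) * \<sigma> $$ (a,a) * cnj (V $$ (s,a))) else 0)
        = of_nat (dimq n) * (V $$ (r,a) * \<sigma> $$ (a,a) * cnj (V $$ (s,a)))" by simp
    then have "(\<Sum>a<dimq n. \<Sum>b<dimq n. if b = a then of_nat (dimq n) * (V $$ (r,a) * \<sigma> $$ (a,a) * cnj (V $$ (s,a))) else 0)
       = (\<Sum>a<dimq n. of_nat (dimq n) * (V $$ (r,a) * \<sigma> $$ (a,a) * cnj (V $$ (s,a))))"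
      by (intro sum.cong refl) simp
    also have "\<dots> = of_nat (dimq n) * D" unfolding D_def by (rule sum_distrib_left[symmetric])
    finally show ?thesis .
  qed
  finally have 2: "(\<Sum>z<dimq n. ((V * Zop n z * adj V) * \<rho> * adj (V * Zop n z * adj V)) $$ (r,s)) = of_nat (dimq n) * D" .
  show ?thesis using 1 2 by (simp add: \<sigma>_def)
qed



lemma Sj_sum:
  assumes U: "unitary_q n V" and rho: "\<rho> \<in> carrier_mat (dimq n) (dimq n)"
    and r: "r < dimq n" and s: "s < dimq n"
    and cardT: "card T = dimq n - 1"
    and VS: "T = {P \<in> Qstar n. \<exists>a. 0 < a \<and> a < dimq n \<and>
                 (\<exists>c. cmod c = 1 \<and> V * Zop n a * adj V = c \<cdot>\<^sub>m pauli n P)}"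
    and VZ: "\<forall>a. 0 < a \<and> a < dimq n \<longrightarrow>
                 (\<exists>P\<in>T. \<exists>c. cmod c = 1 \<and> V * Zop n a * adj V = c \<cdot>\<^sub>m pauli n P)"
  shows "(\<Sum>a\<in>{1..<dimq n}. ((V * Zop n a * adj V) * \<rho> * adj (V * Zop n a * adj V)) $$ (r,s))
       = (\<Sum>P\<in>T. (pauli n P * \<rho> * adj (pauli n P)) $$ (r,s))"
proof -
  let ?W = "\<lambda>a. V * Zop n a * adj V"
  define f where "f a = (SOME P. P \<in> T \<and> (\<exists>c. cmod c = 1 \<and> ?W a = c \<cdot>\<^sub>m pauli n P))" for a
  have fprop: "f a \<in> T \<and> (\<exists>c. cmod c = 1 \<and> ?W a = c \<cdot>\<^sub>m pauli n (f a))" if "a \<in> {1..<dimq n}" for a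
  proof -
    have "0 < a \<and> a < dimq n" using that by auto
    then have "\<exists>P\<in>T. \<exists>c. cmod c = 1 \<and> ?W a = c \<cdot>\<^sub>m pauli n P" using VZ by blast
    then have "\<exists>P. P \<in> T \<and> (\<exists>c. cmod c = 1 \<and> ?W a = c \<cdot>\<^sub>m pauli n P)" by blast
    then show ?thesis unfolding f_def by (rule someI_ex)
  qed
  have Tsub: "T \<subseteq> Qstar n" using VS by auto
  have Qlt: "fst P < dimq n \<and> snd P < dimq n" if "P \<in> Qstar n" for P
    using that by (auto simp: Qstar_def)
  have uniq: "P = P'" if "P \<in> T" "P' \<in> T" "cmod c = 1" "cmod c' = 1" "c \<cdot>\<^sub>m pauli n P = c' \<cdot>\<^sub>m pauli n P'" for P P' c c'
  proof -
    obtain x z where P: "P = (x,z)" by (cases P)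
    obtain x' z' where P': "P' = (x',z')" by (cases P')
    show ?thesis using pauli_unique[of x n x' z z' c c'] that Qlt[of P] Qlt[of P'] Tsub P P' by auto
  qed
  have img: "f ` {1..<dimq n} = T"
  proof
    show "f ` {1..<dimq n} \<subseteq> T" using fprop by auto
    show "T \<subseteq> f ` {1..<dimq n}"
    proof
      fix P assume P: "P \<in> T"
      then obtain a c where a: "0 < a" "a < dimq n" and c: "cmod c = 1" "?W a = c \<cdot>\<^sub>m pauli n P"
        using VS by blast
      have aA: "a \<in> {1..<dimq n}" using a by auto
      obtain c' where c': "cmod c' = 1" "?W a = c' \<cdot>\<^sub>m pauli n (f a)" using fprop[OF aA] by blast
      have "P = f a" using uniq[OF P _ c(1) c'(1)] fprop[OF aA] c c' by auto
      then show "P \<in> f ` {1..<dimq n}" using aA by blast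
    qed
  qed
  have inj: "inj_on f {1..<dimq n}"
  proof (rule eq_card_imp_inj_on)
    show "card (f ` {1..<dimq n}) = card {1..<dimq n}" by (simp only: img cardT card_atLeastLessThan)
  qed simp
  have "(\<Sum>P\<in>T. (pauli n P * \<rho> * adj (pauli n P)) $$ (r,s))
      = (\<Sum>a\<in>{1..<dimq n}. (pauli n (f a) * \<rho> * adj (pauli n (f a))) $$ (r,s))"
    unfolding img[symmetric] by (rule sum.reindex[OF inj, unfolded comp_def])
  also have "\<dots> = (\<Sum>a\<in>{1..<dimq n}. (?W a * \<rho> * adj (?W a)) $$ (r,s))"
  proof (rule sum.cong[OF refl])
    fix a assume aA: "a \<in> {1..<dimq n}"
    obtain c where c: "cmod c = 1" "?W a = c \<cdot>\<^sub>m pauli n (f a)" using fprop[OF aA] by blast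
    show "(pauli n (f a) * \<rho> * adj (pauli n (f a))) $$ (r,s) = (?W a * \<rho> * adj (?W a)) $$ (r,s)"
      unfolding c(2) using phase_conj[OF rho pauli_carrier c(1) r s] by simp
  qed
  finally show ?thesis by simp
qed



lemma alg3: fixes F D x T :: complex assumes "F \<noteq> 0"
  shows "x = (1/F) * (F * x + (1 - F) / D * T) - (1/F - 1) * (T / D)"
  using assms by (cases "D = 0") (simp_all add: field_simps)

lemma final_alg:
  fixes F N t x Tq :: complex and X :: "nat \<Rightarrow> complex" and M :: nat
  assumes F: "F \<noteq> 0" and N0: "N \<noteq> 0" and N1: "N - 1 \<noteq> 0" and N2: "N + 1 \<noteq> 0"
    and Tq: "Tq = N * t - x" and XS: "(\<Sum>j\<le>M. X j) = Tq" and M: "of_nat M = N"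
  shows "x = (1/F) * (F * x + (1 - F) / (N * N - 1) * Tq)
             - (1/F - 1) * (1 / (N + 1) * (\<Sum>j\<le>M. (t - 1 / N * (x + X j)) / (N - 1)))"
proof -
  have "(\<Sum>j\<le>M. (t - 1 / N * (x + X j)) / (N - 1)) = (\<Sum>j\<le>M. (t - x / N) - X j / N) / (N - 1)"
    by (simp add: sum_divide_distrib[symmetric] algebra_simps add_divide_distrib)
  also have "\<dots> = ((N + 1) * (t - x / N) - Tq / N) / (N - 1)"
    by (simp add: sum_subtractf sum_divide_distrib[symmetric] XS M)
  finally have e: "(\<Sum>j\<le>M. (t - 1 / N * (x + X j)) / (N - 1)) = ((N + 1) * (t - x / N) - Tq / N) / (N - 1)" .
  have NN: "N * N - 1 = (N + 1) * (N - 1)" by (simp add: algebra_simps)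
  have NN0: "N * N - 1 \<noteq> 0" unfolding NN using N1 N2 by simp
  have N1': "N \<noteq> 1" using N1 by simp
  have a1: "(N + 1) * (t - x / N) - Tq / N = Tq"
    unfolding Tq using N0 by (simp add: field_simps)
  have a2: "1 / (N + 1) * (((N + 1) * (t - x / N) - Tq / N) / (N - 1)) = Tq / (N * N - 1)"
    unfolding a1 NN using N1 N2 by (simp add: field_simps)
  have a3: "x = (1/F) * (F * x + (1 - F) / (N * N - 1) * Tq) - (1/F - 1) * (Tq / (N * N - 1))"
    by (rule alg3[OF F])
  show ?thesis unfolding e a2 by (rule a3)
qed



lemma adj_one: "adj (1\<^sub>m N) = (1\<^sub>m N :: complex mat)"
  by (rule eq_matI) auto

lemma W0_term:
  assumes U: "unitary_q n V" and rho: "\<rho> \<in> carrier_mat (dimq n) (dimq n)"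
  shows "((V * Zop n 0 * adj V) * \<rho> * adj (V * Zop n 0 * adj V)) = \<rho>"
proof -
  have V: "V \<in> carrier_mat (dimq n) (dimq n)" using unit_carrier[OF U] .
  have "V * Zop n 0 * adj V = V * adj V" unfolding pauli00 using V by simp
  also have "\<dots> = 1\<^sub>m (dimq n)" using U by (simp add: unitary_q_def)
  finally have e: "V * Zop n 0 * adj V = 1\<^sub>m (dimq n)" .
  show ?thesis unfolding e adj_one using rho by simp
qed

theorem theorem1:
  fixes n K :: nat and p :: "nat \<Rightarrow> real" and U V :: "nat \<Rightarrow> complex mat"
    and C :: "complex mat \<Rightarrow> complex mat" and S :: "nat \<Rightarrow> (nat \<times> nat) set"
  assumes n: "n \<ge> 1"
    and chan: "channel n C"
    and F_nz: "ent_fid n C \<noteq> 0"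
    and ens_p: "\<forall>i<K. p i \<ge> 0" and ens_sum: "(\<Sum>i<K. p i) = 1"
    and ens_U: "\<forall>i<K. unitary_q n (U i)"
    and twirl_depol: "\<forall>\<rho> \<in> carrier_mat (dimq n) (dimq n).
                        twirl n K p U C \<rho> = depol n (ent_fid n C) \<rho>"
    and S_sub: "\<forall>j\<le>dimq n. S j \<subseteq> Qstar n"
    and S_disj: "\<forall>j\<le>dimq n. \<forall>j'\<le>dimq n. j \<noteq> j' \<longrightarrow> S j \<inter> S j' = {}"
    and S_cover: "(\<Union>j\<le>dimq n. S j) = Qstar n"
    and S_card: "\<forall>j\<le>dimq n. card (S j) = dimq n - 1"
    and S_comm: "\<forall>j\<le>dimq n. \<forall>P\<in>S j. \<forall>Q\<in>S j. pauli n P * pauli n Q = pauli n Q * pauli n P"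
    and S_max: "\<forall>j\<le>dimq n. \<forall>Q\<in>Qstar n - S j. \<exists>P\<in>S j.
                   pauli n P * pauli n Q \<noteq> pauli n Q * pauli n P"
    and V_unit: "\<forall>j\<le>dimq n. unitary_q n (V j)"
    and V_S: "\<forall>j\<le>dimq n. S j = {P \<in> Qstar n. \<exists>a. 0 < a \<and> a < dimq n \<and>
                 (\<exists>c. cmod c = 1 \<and> V j * Zop n a * adj (V j) = c \<cdot>\<^sub>m pauli n P)}"
    and V_Z: "\<forall>j\<le>dimq n. \<forall>a. 0 < a \<and> a < dimq n \<longrightarrow>
                 (\<exists>P\<in>S j. \<exists>c. cmod c = 1 \<and> V j * Zop n a * adj (V j) = c \<cdot>\<^sub>m pauli n P)"
  shows "\<forall>\<rho> \<in> carrier_mat (dimq n) (dimq n).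
           \<rho> = (1 / ent_fid n C) \<cdot>\<^sub>m twirl n K p U C \<rho>
               - (1 / ent_fid n C - 1) \<cdot>\<^sub>m twirl_V n V (meas_M n) \<rho>"
proof
  fix \<rho> :: "complex mat" assume rho: "\<rho> \<in> carrier_mat (dimq n) (dimq n)"
  define F where "F = ent_fid n C"
  define N :: complex where "N = of_nat (dimq n)"
  have n2: "(2::nat) \<le> dimq n" using n by (metis power_increasing power_one_right zero_less_numeral one_le_numeral)
  have N0: "N \<noteq> 0" unfolding N_def by simp
  have N1: "N - 1 \<noteq> 0"
  proof -
    have a: "N - 1 = of_nat (dimq n - 1)" unfolding N_def using n2 by (simp only: of_nat_diff) simp
    have b: "of_nat (dimq n - 1) \<noteq> (0::complex)" unfolding of_nat_eq_0_iff using n2 by linarith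
    show ?thesis unfolding a by (rule b)
  qed
  have N2: "N + 1 \<noteq> 0"
  proof -
    have a: "N + 1 = of_nat (dimq n + 1)" unfolding N_def by simp
    show ?thesis unfolding a of_nat_eq_0_iff by simp
  qed
  have NN: "(2::complex) ^ (2 * n) = N * N"
    unfolding N_def by (simp add: mult_2 power_add)
  have tw_eq: "twirl n K p U C \<rho> = depol n F \<rho>" using twirl_depol rho by (simp add: F_def)
  show "\<rho> = (1 / ent_fid n C) \<cdot>\<^sub>m twirl n K p U C \<rho> - (1 / ent_fid n C - 1) \<cdot>\<^sub>m twirl_V n V (meas_M n) \<rho>"
    unfolding F_def[symmetric] tw_eq
  proof (rule eq_matI)
    fix r s assume "r < dim_row ((1 / F) \<cdot>\<^sub>m depol n F \<rho> - (1 / F - 1) \<cdot>\<^sub>m twirl_V n V (meas_M n) \<rho>)"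
      and "s < dim_col ((1 / F) \<cdot>\<^sub>m depol n F \<rho> - (1 / F - 1) \<cdot>\<^sub>m twirl_V n V (meas_M n) \<rho>)"
    then have r: "r < dimq n" and s: "s < dimq n" by (simp_all add: twirl_V_def)
    define t where "t = (if r = s then trace_q \<rho> else 0)"
    define Tq where "Tq = (\<Sum>P\<in>Qstar n. (pauli n P * \<rho> * adj (pauli n P)) $$ (r,s))"
    define X where "X j = (\<Sum>P\<in>S j. (pauli n P * \<rho> * adj (pauli n P)) $$ (r,s))" for j
    have Tq_eq: "Tq = N * t - \<rho> $$ (r,s)"
      unfolding Tq_def Tsum_entry[OF rho r s] t_def N_def by simp
    have XS: "(\<Sum>j\<le>dimq n. X j) = Tq"
    proof -
      have fin: "\<forall>j\<in>{..dimq n}. finite (S j)"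
      proof
        fix j assume "j \<in> {..dimq n}"
        then have "S j \<subseteq> Qstar n" using S_sub by auto
        moreover have "finite (Qstar n)" unfolding Qstar_eq by simp
        ultimately show "finite (S j)" by (rule finite_subset)
      qed
      have "Tq = (\<Sum>P\<in>(\<Union>j\<le>dimq n. S j). (pauli n P * \<rho> * adj (pauli n P)) $$ (r,s))"
        unfolding Tq_def S_cover ..
      also have "\<dots> = (\<Sum>j\<le>dimq n. X j)"
        unfolding X_def by (rule sum.UNION_disjoint[OF finite_atMost fin]) (use S_disj in auto)
      finally show ?thesis by simp
    qed
    have dep: "depol n F \<rho> $$ (r,s) = F * \<rho> $$ (r,s) + (1 - F) / (N * N - 1) * Tq"
      using r s by (simp add: depol_def Tq_def NN del: index_mult_mat)
    have VMj: "(V j * meas_M n (adj (V j) * \<rho> * V j) * adj (V j)) $$ (r,s)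
        = (t - 1 / N * (\<rho> $$ (r,s) + X j)) / (N - 1)" if j: "j \<le> dimq n" for j
    proof -
      have Uj: "unitary_q n (V j)" using V_unit j by simp
      let ?g = "\<lambda>a. ((V j * Zop n a * adj (V j)) * \<rho> * adj (V j * Zop n a * adj (V j))) $$ (r,s)"
      have ins: "{..<dimq n} = insert 0 {1..<dimq n}" by auto
      have "(\<Sum>a<dimq n. ?g a) = ?g 0 + (\<Sum>a\<in>{1..<dimq n}. ?g a)"
        unfolding ins by (rule sum.insert) auto
      also have "?g 0 = \<rho> $$ (r,s)" unfolding W0_term[OF Uj rho] ..
      also have "(\<Sum>a\<in>{1..<dimq n}. ?g a) = X j"
        unfolding X_def
        by (rule Sj_sum[OF Uj rho r s]) (use S_card V_S V_Z j in auto)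
      finally have "(\<Sum>a<dimq n. ?g a) = \<rho> $$ (r,s) + X j" .
      then show ?thesis
        unfolding VMV_entry[OF Uj rho r s] t_def N_def by simp
    qed
    have tv: "twirl_V n V (meas_M n) \<rho> $$ (r,s)
        = 1 / (N + 1) * (\<Sum>j\<le>dimq n. (t - 1 / N * (\<rho> $$ (r,s) + X j)) / (N - 1))"
    proof -
      have "twirl_V n V (meas_M n) \<rho> $$ (r,s) = 1 / (N + 1) *
          (\<Sum>j'\<le>dimq n. (V j' * meas_M n (adj (V j') * \<rho> * V j') * adj (V j')) $$ (r,s))"
        using r s by (simp add: twirl_V_def N_def del: index_mult_mat)
      also have "\<dots> = 1 / (N + 1) * (\<Sum>j\<le>dimq n. (t - 1 / N * (\<rho> $$ (r,s) + X j)) / (N - 1))"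
        by (intro arg_cong[where f = "\<lambda>z. 1 / (N + 1) * z"] sum.cong refl) (simp add: VMj del: index_mult_mat)
      finally show ?thesis .
    qed
    have dims: "r < dim_row (depol n F \<rho>)" "s < dim_col (depol n F \<rho>)"
      "r < dim_row (twirl_V n V (meas_M n) \<rho>)" "s < dim_col (twirl_V n V (meas_M n) \<rho>)"
      using r s by (simp_all add: depol_def twirl_V_def)
    have "\<rho> $$ (r,s) = (1/F) * (F * \<rho> $$ (r,s) + (1 - F) / (N * N - 1) * Tq)
             - (1/F - 1) * (1 / (N + 1) * (\<Sum>j\<le>dimq n. (t - 1 / N * (\<rho> $$ (r,s) + X j)) / (N - 1)))"
      by (rule final_alg[OF F_nz[folded F_def] N0 N1 N2 Tq_eq XS]) (simp add: N_def)
    then show "\<rho> $$ (r,s) = ((1 / F) \<cdot>\<^sub>m depol n F \<rho> - (1 / F - 1) \<cdot>\<^sub>m twirl_V n V (meas_M n) \<rho>) $$ (r,s)"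
      using dims by (simp add: dep tv del: index_mult_mat)
  qed (use rho in \<open>simp_all add: twirl_V_def\<close>)
qed

end
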